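(* Let $\mathcal{G}$ be a signed graph on vertex set $\{1,\dots,n\}$ with signed adjacency entries $a_{ij}$ and neighbor sets $N_i$, and assume $\mathcal{G}$ is structurally balanced with gauge transformation $G_t=\mathrm{diag}(\sigma_1,\dots,\sigma_n)$, $\sigma_i\in\{\pm1\}$. Consider the absolute nonlinear flow $$\dot x_i = -\sum_{j\in N_i}\big[f(x_i)-\mathrm{sgn}(a_{ij})f(x_j)\big],\quad i=1,\dots,n,$$ where $f:\mathbb{R}\to\mathbb{R}$ is a smooth odd function. Suppose $\mathcal{G}$ has a non-trivial signed automorphism $\varphi'=g\circ\varphi\circ g$, where $\varphi$ is induced by a non-identity automorphism $\phi$ of $\mathcal{G}$. Then for any vertex $l$ with $\phi(l)=l$ chosen as the leader, the leader-follower network is not accessible from the origin in $\mathbb{R}^{n-1}$. Moreover, the same conclusion holds when $f$ is a smooth even function, provided $\varphi'$ preserves edge signs, i.e. $\mathrm{sgn}(a_{ij})=\mathrm{sgn}(a_{\phi(i)\phi(j)})$ for all edges $ij$.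
   Context: A signed graph has edges with positive or negative weights $a_{ij}$ (nonzero iff $ij$ is an edge). It is structurally balanced if its vertex set admits a bipartition such that edges within each part have positive weight and edges between the parts have negative weight; equivalently there is a gauge transformation $G_t=\mathrm{diag}(\sigma)$, $\sigma_i\in\{\pm1\}$, such that $G_tA_sG_t$ has only nonnegative entries ($A_s$ the signed adjacency matrix), i.e. $\sigma_i\sigma_j=\mathrm{sgn}(a_{ij})$ for every edge $ij$. An automorphism of $\mathcal{G}$ is a permutation $\phi$ of the vertices with $\phi(i)\phi(j)$ an edge iff $ij$ is an edge; it induces $\varphi:\mathbb{R}^n\to\mathbb{R}^n$, $[\varphi(x)]_i=x_{\phi(i)}$. The gauge induces $g:\mathbb{R}^n\to\mathbb{R}^n$, $[g(x)]_i=\sigma_i x_i$. The signed automorphism is $\varphi'=g\circ\varphi\circ g$, so $[\varphi'(x)]_i=\sigma_i\sigma_{\phi(i)}x_{\phi(i)}$; it is non-trivial when $\phi$ is not the identity. For a chosen leader vertex $l$, the leader-follower network is the control system on $\mathbb{R}^{n-1}$ with state $(x_i)_{i\neq l}$, evolving by $\dot x_i=F_i(x)$ for $i\ne l$ where $F$ is the flow's right-hand side and the leader's state $x_l=u$ is treated as the control input. For a control system $\dot x=F(x,u)$, the accessible set $\mathcal{A}(x_0,\le T)$ is the set of all endpoints $\theta(\tau)$, $0\le\tau\le T$, of trajectories $\theta$ with $\theta(0)=x_0$; the system is accessible from $x_0$ if $\mathcal{A}(x_0,\le T)$ has nonempty interior for every $T>0$. *)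

theory Defs
  imports "HOL-Analysis.Analysis"
begin

text \<open>Vertices form a finite type 'v (so n = CARD('v)); the signed adjacency
  matrix is a :: 'v => 'v => real, with ij an edge iff a i j ~= 0.\<close>

definition signed_graph :: "('v \<Rightarrow> 'v \<Rightarrow> real) \<Rightarrow> bool" where
  "signed_graph a \<longleftrightarrow> (\<forall>i j. a i j = a j i) \<and> (\<forall>i. a i i = 0)"

definition nbrs :: "('v \<Rightarrow> 'v \<Rightarrow> real) \<Rightarrow> 'v \<Rightarrow> 'v set" where
  "nbrs a i = {j. a i j \<noteq> 0}"

definition balanced_with_gauge :: "('v \<Rightarrow> 'v \<Rightarrow> real) \<Rightarrow> ('v \<Rightarrow> real) \<Rightarrow> bool" where
  "balanced_with_gauge a \<sigma> \<longleftrightarrow>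
     (\<forall>i. \<sigma> i = 1 \<or> \<sigma> i = -1) \<and> (\<forall>i j. a i j \<noteq> 0 \<longrightarrow> \<sigma> i * \<sigma> j = sgn (a i j))"

definition graph_automorphism :: "('v \<Rightarrow> 'v \<Rightarrow> real) \<Rightarrow> ('v \<Rightarrow> 'v) \<Rightarrow> bool" where
  "graph_automorphism a \<phi> \<longleftrightarrow> bij \<phi> \<and> (\<forall>i j. a (\<phi> i) (\<phi> j) \<noteq> 0 \<longleftrightarrow> a i j \<noteq> 0)"

definition smooth_fun :: "(real \<Rightarrow> real) \<Rightarrow> bool" where
  "smooth_fun f \<longleftrightarrow> (\<forall>k x. ((deriv ^^ k) f) field_differentiable (at x))"

definition abs_flow :: "(real \<Rightarrow> real) \<Rightarrow> ('v::finite \<Rightarrow> 'v \<Rightarrow> real) \<Rightarrow> real ^ 'v \<Rightarrow> real ^ 'v" where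
  "abs_flow f a x = (\<chi> i. - (\<Sum>j\<in>nbrs a i. f (x $ i) - sgn (a i j) * f (x $ j)))"

text \<open>The follower state space R^(n-1) is
  represented as the coordinate hyperplane {x. x $ l = 0} of R^n; the leader
  coordinate is replaced by the control input u.\<close>
definition lf_field :: "(real ^ 'v \<Rightarrow> real ^ 'v) \<Rightarrow> 'v::finite \<Rightarrow> real ^ 'v \<Rightarrow> real \<Rightarrow> real ^ 'v" where
  "lf_field F l x u = (\<chi> i. if i = l then 0 else F (\<chi> j. if j = l then u else x $ j) $ i)"

definition follower_space :: "'v::finite \<Rightarrow> (real ^ 'v) set" where
  "follower_space l = {x. x $ l = 0}"

definition lf_trajectory ::
  "(real ^ 'v \<Rightarrow> real ^ 'v) \<Rightarrow> 'v::finite \<Rightarrow> real ^ 'v \<Rightarrow> (real \<Rightarrow> real ^ 'v) \<Rightarrow> (real \<Rightarrow> real) \<Rightarrow> real \<Rightarrow> bool" where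
  "lf_trajectory F l x0 \<theta> u \<tau> \<longleftrightarrow> \<theta> 0 = x0 \<and>
     (\<forall>t\<in>{0..\<tau>}. (\<theta> has_vector_derivative lf_field F l (\<theta> t) (u t)) (at t within {0..\<tau>}))"

definition accessible_set ::
  "(real ^ 'v \<Rightarrow> real ^ 'v) \<Rightarrow> 'v::finite \<Rightarrow> real ^ 'v \<Rightarrow> real \<Rightarrow> (real ^ 'v) set" where
  "accessible_set F l x0 T =
     {\<theta> \<tau> | \<theta> u \<tau>. 0 \<le> \<tau> \<and> \<tau> \<le> T \<and> lf_trajectory F l x0 \<theta> u \<tau>}"

text \<open>Accessibility: the accessible set has nonempty interior in the follower
  space (interior relative to the hyperplane, which is a copy of R^(n-1)).\<close>
definition lf_accessible :: "(real ^ 'v \<Rightarrow> real ^ 'v) \<Rightarrow> 'v::finite \<Rightarrow> real ^ 'v \<Rightarrow> bool" where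
  "lf_accessible F l x0 \<longleftrightarrow> (\<forall>T>0. \<exists>U. open U \<and> U \<inter> follower_space l \<noteq> {} \<and>
       U \<inter> follower_space l \<subseteq> accessible_set F l x0 T)"

end

theory Submission
  imports Defs
begin


lemma inner_self_deriv:
  fixes d :: "real \<Rightarrow> 'a::real_inner"
  assumes "(d has_vector_derivative D) (at t within S)"
  shows "((\<lambda>t. d t \<bullet> d t) has_real_derivative (2 * (d t \<bullet> D))) (at t within S)"
proof -
  have "(d has_derivative (\<lambda>h. h *\<^sub>R D)) (at t within S)"
    using assms by (simp add: has_vector_derivative_def)
  then have "((\<lambda>t. d t \<bullet> d t) has_derivative (\<lambda>h. d t \<bullet> (h *\<^sub>R D) + (h *\<^sub>R D) \<bullet> d t)) (at t within S)"
    by (intro derivative_eq_intros) auto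
  moreover have "(\<lambda>h. d t \<bullet> (h *\<^sub>R D) + (h *\<^sub>R D) \<bullet> d t) = (\<lambda>h. h * (2 * (d t \<bullet> D)))"
    by (auto simp: inner_commute algebra_simps)
  ultimately show ?thesis unfolding has_field_derivative_def by (metis (no_types, lifting) mult.commute ext)
qed

lemma ode_unique:
  fixes \<theta> \<eta> :: "real \<Rightarrow> 'a::real_inner"
  assumes t1: "\<And>t. t \<in> {0..\<tau>} \<Longrightarrow> (\<theta> has_vector_derivative A t) (at t within {0..\<tau>})"
    and t2: "\<And>t. t \<in> {0..\<tau>} \<Longrightarrow> (\<eta> has_vector_derivative B t) (at t within {0..\<tau>})"
    and init: "\<theta> 0 = \<eta> 0"
    and L: "L \<ge> 0"
    and lip: "\<And>t. t \<in> {0..\<tau>} \<Longrightarrow> norm (A t - B t) \<le> L * norm (\<theta> t - \<eta> t)"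
    and t: "t \<in> {0..\<tau>}"
  shows "\<theta> t = \<eta> t"
proof -
  define d where "d = (\<lambda>t. \<theta> t - \<eta> t)"
  define g where "g = (\<lambda>t. exp (- 2 * L * t) * (d t \<bullet> d t))"
  have dd: "(d has_vector_derivative (A s - B s)) (at s within {0..\<tau>})" if "s \<in> {0..\<tau>}" for s
    unfolding d_def using t1[OF that] t2[OF that] by (auto intro!: derivative_eq_intros)
  have gd: "(g has_real_derivative (exp (- 2 * L * s) * (2 * (d s \<bullet> (A s - B s))) + (- 2 * L) * exp (- 2 * L * s) * (d s \<bullet> d s)))
     (at s within {0..\<tau>})" if "s \<in> {0..\<tau>}" for s
  proof -
    have e: "((\<lambda>t. exp (- 2 * L * t)) has_real_derivative (- 2 * L) * exp (- 2 * L * s)) (at s within {0..\<tau>})"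
      by (auto intro!: derivative_eq_intros)
    show ?thesis unfolding g_def
      using DERIV_mult[OF e inner_self_deriv[OF dd[OF that]]] by (simp add: algebra_simps)
  qed
  have neg: "exp (- 2 * L * s) * (2 * (d s \<bullet> (A s - B s))) + (- 2 * L) * exp (- 2 * L * s) * (d s \<bullet> d s) \<le> 0"
    if "s \<in> {0..\<tau>}" for s
  proof -
    have "d s \<bullet> (A s - B s) \<le> norm (d s) * norm (A s - B s)" by (rule Cauchy_Schwarz_ineq2[THEN order_trans[OF abs_ge_self]])
    also have "\<dots> \<le> norm (d s) * (L * norm (d s))" using lip[OF that] by (simp add: d_def mult_left_mono)
    finally have "d s \<bullet> (A s - B s) \<le> L * (d s \<bullet> d s)" by (simp add: power2_norm_eq_inner[symmetric] power2_eq_square algebra_simps)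
    then have "2 * (d s \<bullet> (A s - B s)) - 2 * L * (d s \<bullet> d s) \<le> 0" by simp
    then have "exp (- 2 * L * s) * (2 * (d s \<bullet> (A s - B s)) - 2 * L * (d s \<bullet> d s)) \<le> 0"
      by (simp add: mult_nonneg_nonpos)
    then show ?thesis by (simp add: algebra_simps)
  qed
  have cont: "continuous_on {0..\<tau>} g"
    using gd by (meson DERIV_continuous continuous_at_imp_continuous_on continuous_on_eq_continuous_within)
  have "g t \<le> g 0"
  proof (rule DERIV_nonpos_imp_decreasing_open[of 0 t g])
    show "0 \<le> t" using t by simp
    show "continuous_on {0..t} g" using t by (intro continuous_on_subset[OF cont]) auto
    fix x assume x: "0 < x" "x < t"
    then have "x \<in> {0..\<tau>}" using t by auto
    moreover have "at x within {0..\<tau>} = at x" using x t by (intro at_within_Icc_at) auto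
    ultimately show "\<exists>y. (g has_real_derivative y) (at x) \<and> y \<le> 0"
      using gd neg by metis
  qed
  moreover have "g 0 = 0" using init by (simp add: g_def d_def)
  moreover have "g t \<ge> 0" by (simp add: g_def)
  ultimately have "g t = 0" by simp
  then have "d t = 0" by (simp add: g_def)
  then show ?thesis by (simp add: d_def)
qed

lemma traj_fixed:
  fixes F :: "real ^ 'v \<Rightarrow> real ^ 'v" and M :: "real ^ 'v \<Rightarrow> real ^ 'v"
  assumes lin: "bounded_linear M"
    and equiv: "\<And>x u. lf_field F l (M x) u = M (lf_field F l x u)"
    and lip: "\<And>R. \<exists>L\<ge>0. \<forall>x y u. norm x \<le> R \<longrightarrow> norm y \<le> R \<longrightarrow>
                 norm (lf_field F l x u - lf_field F l y u) \<le> L * norm (x - y)"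
    and tr: "lf_trajectory F l 0 \<theta> u \<tau>" and \<tau>: "0 \<le> \<tau>"
  shows "M (\<theta> \<tau>) = \<theta> \<tau>"
proof -
  interpret M: bounded_linear M by fact
  have th0: "\<theta> 0 = 0" and thd: "\<And>t. t \<in> {0..\<tau>} \<Longrightarrow>
     (\<theta> has_vector_derivative lf_field F l (\<theta> t) (u t)) (at t within {0..\<tau>})"
    using tr by (auto simp: lf_trajectory_def)
  have etd: "((\<lambda>t. M (\<theta> t)) has_vector_derivative lf_field F l (M (\<theta> t)) (u t)) (at t within {0..\<tau>})"
    if "t \<in> {0..\<tau>}" for t
    using M.has_vector_derivative[OF thd[OF that]] by (simp add: equiv)
  have c1: "continuous_on {0..\<tau>} \<theta>"
    using thd has_vector_derivative_continuous continuous_on_eq_continuous_within by blast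
  have c2: "continuous_on {0..\<tau>} (\<lambda>t. M (\<theta> t))"
    using etd has_vector_derivative_continuous continuous_on_eq_continuous_within by blast
  obtain R1 where R1: "\<And>t. t \<in> {0..\<tau>} \<Longrightarrow> norm (\<theta> t) \<le> R1"
    using compact_imp_bounded[OF compact_continuous_image[OF c1 compact_Icc]] by (auto simp: bounded_iff) (meson atLeastAtMost_iff)
  obtain R2 where R2: "\<And>t. t \<in> {0..\<tau>} \<Longrightarrow> norm (M (\<theta> t)) \<le> R2"
    using compact_imp_bounded[OF compact_continuous_image[OF c2 compact_Icc]] by (auto simp: bounded_iff) (meson atLeastAtMost_iff)
  obtain L where L: "L \<ge> 0" and Lp: "\<And>x y u. norm x \<le> max R1 R2 \<Longrightarrow> norm y \<le> max R1 R2 \<Longrightarrow>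
                 norm (lf_field F l x u - lf_field F l y u) \<le> L * norm (x - y)"
    using lip[of "max R1 R2"] by blast
  have "\<theta> \<tau> = M (\<theta> \<tau>)"
  proof (rule ode_unique[OF thd etd _ L])
    show "\<theta> 0 = M (\<theta> 0)" using th0 by simp
    show "\<tau> \<in> {0..\<tau>}" using \<tau> by simp
    fix t assume t: "t \<in> {0..\<tau>}"
    show "norm (lf_field F l (\<theta> t) (u t) - lf_field F l (M (\<theta> t)) (u t)) \<le> L * norm (\<theta> t - M (\<theta> t))"
      using R1[OF t] R2[OF t] by (intro Lp) auto
  qed
  then show ?thesis by simp
qed

lemma not_acc:
  fixes F :: "real ^ 'v \<Rightarrow> real ^ 'v" and M :: "real ^ 'v \<Rightarrow> real ^ 'v"
  assumes lin: "bounded_linear M"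
    and equiv: "\<And>x u. lf_field F l (M x) u = M (lf_field F l x u)"
    and lip: "\<And>R. \<exists>L\<ge>0. \<forall>x y u. norm x \<le> R \<longrightarrow> norm y \<le> R \<longrightarrow>
                 norm (lf_field F l x u - lf_field F l y u) \<le> L * norm (x - y)"
    and e: "e $ l = 0" "M e \<noteq> e"
  shows "\<not> lf_accessible F l 0"
proof
  interpret M: bounded_linear M by fact
  assume "lf_accessible F l 0"
  then obtain U where U: "open U" "U \<inter> follower_space l \<noteq> {}"
      "U \<inter> follower_space l \<subseteq> accessible_set F l 0 1"
  proof -
    have "\<forall>T>0. \<exists>U. open U \<and> U \<inter> follower_space l \<noteq> {} \<and>
       U \<inter> follower_space l \<subseteq> accessible_set F l 0 T"
      using \<open>lf_accessible F l 0\<close> unfolding lf_accessible_def by blast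
    then have "\<exists>U. open U \<and> U \<inter> follower_space l \<noteq> {} \<and>
       U \<inter> follower_space l \<subseteq> accessible_set F l 0 1" by simp
    then show ?thesis using that by blast
  qed
  have fxd: "M p = p" if "p \<in> U \<inter> follower_space l" for p
  proof -
    have "p \<in> accessible_set F l 0 1" using U(3) that by blast
    then obtain \<theta> u \<tau> where "p = \<theta> \<tau>" "0 \<le> \<tau>" "lf_trajectory F l 0 \<theta> u \<tau>"
      unfolding accessible_set_def by blast
    then show ?thesis using traj_fixed[OF lin equiv lip, of \<theta> u \<tau>] by simp
  qed
  obtain p where p: "p \<in> U" "p $ l = 0" using U(2) by (auto simp: follower_space_def)
  obtain \<epsilon> where \<epsilon>: "\<epsilon> > 0" "ball p \<epsilon> \<subseteq> U" using U(1) p(1) open_contains_ball by blast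
  have en: "e \<noteq> 0" using e(2) M.zero by auto
  define c where "c = \<epsilon> / (2 * norm e)"
  have c: "c > 0" using \<epsilon> en by (simp add: c_def)
  have "norm (c *\<^sub>R e) < \<epsilon>" using \<epsilon> en by (simp add: c_def)
  then have "p + c *\<^sub>R e \<in> U" using \<epsilon>(2) by (auto simp: dist_norm)
  then have "M (p + c *\<^sub>R e) = p + c *\<^sub>R e" using p e by (intro fxd) (auto simp: follower_space_def)
  moreover have "M p = p" using p by (intro fxd) (auto simp: follower_space_def)
  ultimately have "c *\<^sub>R M e = c *\<^sub>R e" by (simp add: M.add M.scaleR)
  then show False using c e(2) by simp
qed

definition Mmap :: "('v \<Rightarrow> real) \<Rightarrow> ('v \<Rightarrow> 'v) \<Rightarrow> real ^ 'v \<Rightarrow> real ^ 'v" where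
  "Mmap c \<phi> x = (\<chi> i. c i * x $ \<phi> i)"

lemma Mmap_bl: "bounded_linear (Mmap c \<phi> :: real ^ 'v::finite \<Rightarrow> real ^ 'v)"
proof -
  have "linear (Mmap c \<phi> :: real ^ 'v::finite \<Rightarrow> real ^ 'v)"
    by (rule linearI) (auto simp: Mmap_def vec_eq_iff algebra_simps)
  then show ?thesis using linear_conv_bounded_linear by blast
qed

lemma nbrs_image:
  assumes "graph_automorphism a \<phi>"
  shows "\<phi> ` nbrs a i = nbrs a (\<phi> i)"
proof -
  have b: "bij \<phi>" and e: "\<And>i j. a (\<phi> i) (\<phi> j) \<noteq> 0 \<longleftrightarrow> a i j \<noteq> 0"
    using assms by (auto simp: graph_automorphism_def)
  show ?thesis
  proof
    show "\<phi> ` nbrs a i \<subseteq> nbrs a (\<phi> i)" using e by (auto simp: nbrs_def)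
    show "nbrs a (\<phi> i) \<subseteq> \<phi> ` nbrs a i"
    proof
      fix k assume k: "k \<in> nbrs a (\<phi> i)"
      obtain j where j: "k = \<phi> j" using b by (metis bij_pointE)
      then show "k \<in> \<phi> ` nbrs a i" using k e by (auto simp: nbrs_def)
    qed
  qed
qed

lemma equiv_lf:
  fixes a :: "'v::finite \<Rightarrow> 'v \<Rightarrow> real"
  assumes aut: "graph_automorphism a \<phi>" and fl: "\<phi> l = l" and cl: "c l = 1"
    and tm: "\<And>i j z w. a i j \<noteq> 0 \<Longrightarrow>
        f (c i * z) - sgn (a i j) * f (c j * w) = c i * (f z - sgn (a (\<phi> i) (\<phi> j)) * f w)"
  shows "lf_field (abs_flow f a) l (Mmap c \<phi> x) u = Mmap c \<phi> (lf_field (abs_flow f a) l x u)"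
proof -
  have b: "bij \<phi>" using aut by (simp add: graph_automorphism_def)
  then have inj: "inj \<phi>" by (simp add: bij_is_inj)
  have fj: "\<phi> j = l \<longleftrightarrow> j = l" for j using inj fl by (metis inj_eq)
  define y where "y = (\<chi> j. if j = l then u else x $ j)"
  have y: "(\<chi> j. if j = l then u else Mmap c \<phi> x $ j) = Mmap c \<phi> y"
    by (auto simp: vec_eq_iff Mmap_def y_def fj fl cl)
  have af: "abs_flow f a (Mmap c \<phi> z) $ i = c i * abs_flow f a z $ \<phi> i" for z i
  proof -
    have "abs_flow f a (Mmap c \<phi> z) $ i = - (\<Sum>j\<in>nbrs a i. c i * (f (z $ \<phi> i) - sgn (a (\<phi> i) (\<phi> j)) * f (z $ \<phi> j)))"
      unfolding abs_flow_def Mmap_def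
      by (simp, intro arg_cong[where f=uminus] sum.cong refl tm) (simp add: nbrs_def)
    also have "\<dots> = - c i * (\<Sum>j\<in>nbrs a i. (\<lambda>k. f (z $ \<phi> i) - sgn (a (\<phi> i) k) * f (z $ k)) (\<phi> j))"
      by (simp add: sum_distrib_left sum_negf)
    also have "\<dots> = - c i * (\<Sum>k\<in>nbrs a (\<phi> i). f (z $ \<phi> i) - sgn (a (\<phi> i) k) * f (z $ k))"
    proof -
      have injN: "inj_on \<phi> (nbrs a i)" by (rule inj_on_subset[OF inj subset_UNIV])
      have "sum (\<lambda>k. f (z $ \<phi> i) - sgn (a (\<phi> i) k) * f (z $ k)) (\<phi> ` nbrs a i)
          = sum ((\<lambda>k. f (z $ \<phi> i) - sgn (a (\<phi> i) k) * f (z $ k)) \<circ> \<phi>) (nbrs a i)"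
        by (rule sum.reindex[OF injN])
      then show ?thesis by (simp add: nbrs_image[OF aut] o_def)
    qed
    finally show ?thesis by (simp add: abs_flow_def)
  qed
  show ?thesis
    unfolding lf_field_def y
    by (simp add: vec_eq_iff af fj, simp add: Mmap_def y_def fj)
qed

lemma f_lip:
  assumes "smooth_fun f"
  shows "\<exists>B\<ge>0. \<forall>x y. \<bar>x\<bar> \<le> R \<longrightarrow> \<bar>y\<bar> \<le> R \<longrightarrow> \<bar>f x - f y\<bar> \<le> B * \<bar>x - y\<bar>"
proof -
  have d0: "\<And>x. f field_differentiable (at x)" and d1: "\<And>x. deriv f field_differentiable (at x)"
    using assms unfolding smooth_fun_def
    by (metis funpow_0, metis (no_types) One_nat_def funpow.simps(2) funpow_0 o_apply)
  have D: "\<And>x. (f has_field_derivative deriv f x) (at x)"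
    using d0 DERIV_deriv_iff_field_differentiable by blast
  have cont: "continuous_on {-R..R} (deriv f)"
    using d1 field_differentiable_imp_continuous_at continuous_at_imp_continuous_on by blast
  have "bounded (deriv f ` {-R..R})"
    by (rule compact_imp_bounded[OF compact_continuous_image[OF cont compact_Icc]])
  then obtain B where B: "\<And>x. x \<in> {-R..R} \<Longrightarrow> norm (deriv f x) \<le> B"
    by (auto simp: bounded_iff) (meson atLeastAtMost_iff)
  have "\<bar>f x - f y\<bar> \<le> max B 0 * \<bar>x - y\<bar>" if "\<bar>x\<bar> \<le> R" "\<bar>y\<bar> \<le> R" for x y
  proof -
    have "norm (f x - f y) \<le> B * norm (x - y)"
      by (rule field_differentiable_bound[of "{-R..R}" f "deriv f"])
         (use that B D in \<open>auto intro: has_field_derivative_at_within\<close>)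
    also have "\<dots> \<le> max B 0 * norm (x - y)" by (intro mult_right_mono) auto
    finally show ?thesis by simp
  qed
  then show ?thesis by (intro exI[of _ "max B 0"]) auto
qed

lemma lf_lip:
  fixes a :: "'v::finite \<Rightarrow> 'v \<Rightarrow> real"
  assumes "smooth_fun f"
  shows "\<exists>L\<ge>0. \<forall>x y u. norm x \<le> R \<longrightarrow> norm y \<le> R \<longrightarrow>
     norm (lf_field (abs_flow f a) l x u - lf_field (abs_flow f a) l y u) \<le> L * norm (x - y)"
proof -
  obtain B where B0: "B \<ge> 0" and B: "\<And>x y. \<bar>x\<bar> \<le> R \<Longrightarrow> \<bar>y\<bar> \<le> R \<Longrightarrow> \<bar>f x - f y\<bar> \<le> B * \<bar>x - y\<bar>"
    using f_lip[OF assms] by blast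
  define n where "n = real CARD('v)"
  have n0: "n \<ge> 0" by (simp add: n_def)
  have "norm (lf_field (abs_flow f a) l x u - lf_field (abs_flow f a) l y u) \<le> (n * (n * (2 * B))) * norm (x - y)"
    if x: "norm x \<le> R" and y: "norm y \<le> R" for x y :: "real ^ 'v" and u
  proof -
    define X where "X = (\<chi> j. if j = l then u else x $ j)"
    define Y where "Y = (\<chi> j. if j = l then u else y $ j)"
    have fj: "\<bar>f (X $ j) - f (Y $ j)\<bar> \<le> B * norm (x - y)" for j
    proof (cases "j = l")
      case True then show ?thesis using B0 by (simp add: X_def Y_def)
    next
      case False
      have "\<bar>f (x $ j) - f (y $ j)\<bar> \<le> B * \<bar>x $ j - y $ j\<bar>"
        using x y component_le_norm_cart[of x j] component_le_norm_cart[of y j] by (intro B) auto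
      also have "\<dots> \<le> B * norm (x - y)"
        using component_le_norm_cart[of "x - y" j] B0 by (intro mult_left_mono) auto
      finally show ?thesis using False by (simp add: X_def Y_def)
    qed
    have comp: "\<bar>(lf_field (abs_flow f a) l x u - lf_field (abs_flow f a) l y u) $ i\<bar> \<le> n * (2 * B) * norm (x - y)" for i
    proof (cases "i = l")
      case True then show ?thesis using B0 n0 by (simp add: lf_field_def)
    next
      case False
      have "(lf_field (abs_flow f a) l x u - lf_field (abs_flow f a) l y u) $ i
          = - (\<Sum>j\<in>nbrs a i. (f (X $ i) - f (Y $ i)) - sgn (a i j) * (f (X $ j) - f (Y $ j)))"
        using False by (simp add: lf_field_def abs_flow_def X_def[symmetric] Y_def[symmetric]
            sum_subtractf[symmetric] algebra_simps) (simp add: sum_negf[symmetric])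
      also have "\<bar>\<dots>\<bar> \<le> (\<Sum>j\<in>nbrs a i. \<bar>(f (X $ i) - f (Y $ i)) - sgn (a i j) * (f (X $ j) - f (Y $ j))\<bar>)"
        by (simp add: sum_abs)
      also have "\<dots> \<le> (\<Sum>j\<in>nbrs a i. 2 * B * norm (x - y))"
      proof (rule sum_mono)
        fix j
        have s: "\<bar>sgn (a i j)\<bar> \<le> 1" by (simp add: abs_sgn_eq)
        have "\<bar>sgn (a i j) * (f (X $ j) - f (Y $ j))\<bar> \<le> 1 * (B * norm (x - y))"
          unfolding abs_mult by (rule mult_mono[OF s fj[of j]]) auto
        then show "\<bar>(f (X $ i) - f (Y $ i)) - sgn (a i j) * (f (X $ j) - f (Y $ j))\<bar> \<le> 2 * B * norm (x - y)"
          using fj[of i] by linarith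
      qed
      also have "\<dots> \<le> (\<Sum>j\<in>(UNIV::'v set). 2 * B * norm (x - y))"
        by (rule sum_mono2) (use B0 in auto)
      also have "\<dots> = n * (2 * B) * norm (x - y)" by (simp add: n_def)
      finally show ?thesis .
    qed
    have "norm (lf_field (abs_flow f a) l x u - lf_field (abs_flow f a) l y u)
        \<le> (\<Sum>i\<in>UNIV. \<bar>(lf_field (abs_flow f a) l x u - lf_field (abs_flow f a) l y u) $ i\<bar>)"
      by (rule norm_le_l1_cart)
    also have "\<dots> \<le> (\<Sum>i\<in>(UNIV::'v set). n * (2 * B) * norm (x - y))" by (intro sum_mono comp)
    also have "\<dots> = (n * (n * (2 * B))) * norm (x - y)" by (simp add: n_def)
    finally show ?thesis .
  qed
  moreover have "n * (n * (2 * B)) \<ge> 0" using n0 B0 by simp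
  ultimately show ?thesis by blast
qed


lemma sig_id:
  fixes si sj sfi sfj F W :: real
  assumes "sj * sj = 1" "sfi * sfi = 1"
  shows "si * sfi * F - si * sj * (sj * sfj * W) = si * sfi * (F - sfi * sfj * W)"
  using assms by algebra

lemma odd_sign: "(\<forall>x::real. f (- x) = (- f x::real)) \<Longrightarrow> s = 1 \<or> s = -1 \<Longrightarrow> f (s * x) = s * f x"
  by (erule disjE) simp_all

lemma main_gen:
  fixes a :: "'v::finite \<Rightarrow> 'v \<Rightarrow> real"
  assumes aut: "graph_automorphism a \<phi>" and fl: "\<phi> l = l" and cl: "c l = 1"
    and cpm: "\<And>i. c i = 1 \<or> c i = -1"
    and sm: "smooth_fun f"
    and tm: "\<And>i j z w. a i j \<noteq> 0 \<Longrightarrow>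
        f (c i * z) - sgn (a i j) * f (c j * w) = c i * (f z - sgn (a (\<phi> i) (\<phi> j)) * f w)"
    and nid: "\<phi> \<noteq> id"
  shows "\<not> lf_accessible (abs_flow f a) l 0"
proof -
  obtain i where i: "\<phi> i \<noteq> i" using nid unfolding fun_eq_iff id_def by auto
  then have il: "i \<noteq> l" using fl by auto
  show ?thesis
  proof (rule not_acc[where M="Mmap c \<phi>" and e="axis i 1"])
    show "bounded_linear (Mmap c \<phi> :: real ^ 'v \<Rightarrow> real ^ 'v)" by (rule Mmap_bl)
    show "\<And>x u. lf_field (abs_flow f a) l (Mmap c \<phi> x) u = Mmap c \<phi> (lf_field (abs_flow f a) l x u)"
      by (rule equiv_lf[where c=c and f=f and a=a and l=l and \<phi>=\<phi>, OF aut fl cl], rule tm)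
    show "\<And>R. \<exists>L\<ge>0. \<forall>x y u. norm x \<le> R \<longrightarrow> norm y \<le> R \<longrightarrow>
       norm (lf_field (abs_flow f a) l x u - lf_field (abs_flow f a) l y u) \<le> L * norm (x - y)"
      by (rule lf_lip[OF sm])
    show "axis i 1 $ l = 0" using il by (simp add: axis_def)
    have "Mmap c \<phi> (axis i 1) $ i = 0" using i by (simp add: Mmap_def axis_def)
    then show "Mmap c \<phi> (axis i 1) \<noteq> axis i 1"
    proof (intro notI)
      assume h0: "Mmap c \<phi> (axis i 1) $ i = 0" and h: "Mmap c \<phi> (axis i 1) = axis i 1"
      have "axis i (1::real) $ i = 0" using h0 unfolding h .
      then show False by simp
    qed
  qed
qed

theorem theorem4:
  fixes a :: "'v::finite \<Rightarrow> 'v \<Rightarrow> real" and \<sigma> :: "'v \<Rightarrow> real"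
    and \<phi> :: "'v \<Rightarrow> 'v" and l :: 'v
  assumes "signed_graph a"
    and "balanced_with_gauge a \<sigma>"
    and "graph_automorphism a \<phi>"
    and "\<phi> \<noteq> id"
    and "\<phi> l = l"
  shows "(\<forall>f. smooth_fun f \<and> (\<forall>x. f (- x) = - f x) \<longrightarrow> \<not> lf_accessible (abs_flow f a) l 0)
       \<and> ((\<forall>i j. a i j \<noteq> 0 \<longrightarrow> sgn (a i j) = sgn (a (\<phi> i) (\<phi> j))) \<longrightarrow>
           (\<forall>f. smooth_fun f \<and> (\<forall>x. f (- x) = f x) \<longrightarrow> \<not> lf_accessible (abs_flow f a) l 0))"
proof (intro conjI allI impI; elim conjE)
  have spm: "\<And>i. \<sigma> i = 1 \<or> \<sigma> i = -1" and ssg: "\<And>i j. a i j \<noteq> 0 \<Longrightarrow> \<sigma> i * \<sigma> j = sgn (a i j)"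
    using assms(2) by (auto simp: balanced_with_gauge_def)
  have aut: "\<And>i j. a (\<phi> i) (\<phi> j) \<noteq> 0 \<longleftrightarrow> a i j \<noteq> 0"
    using assms(3) by (auto simp: graph_automorphism_def)
  fix f assume sm: "smooth_fun f" and odd: "\<forall>x. f (- x) = - f x"
  define c where "c = (\<lambda>i. \<sigma> i * \<sigma> (\<phi> i))"
  have cpm: "c i = 1 \<or> c i = -1" for i
    unfolding c_def using spm[of i] spm[of "\<phi> i"] by auto
  have cl: "c l = 1" unfolding c_def using spm[of l] assms(5) by auto
  have tm: "f (c i * z) - sgn (a i j) * f (c j * w) = c i * (f z - sgn (a (\<phi> i) (\<phi> j)) * f w)"
    if aij: "a i j \<noteq> 0" for i j z w
  proof -
    have e1: "sgn (a i j) = \<sigma> i * \<sigma> j" using ssg[OF aij] by simp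
    have e2: "sgn (a (\<phi> i) (\<phi> j)) = \<sigma> (\<phi> i) * \<sigma> (\<phi> j)" using ssg aut aij by metis
    have q1: "\<sigma> j * \<sigma> j = 1" and q2: "\<sigma> (\<phi> i) * \<sigma> (\<phi> i) = 1"
      using spm[of j] spm[of "\<phi> i"] by auto
    have "f (c i * z) = c i * f z" "f (c j * w) = c j * f w" using odd_sign[OF odd cpm] by auto
    then show "f (c i * z) - sgn (a i j) * f (c j * w) = c i * (f z - sgn (a (\<phi> i) (\<phi> j)) * f w)"
      unfolding e1 e2 c_def by (simp only: sig_id[OF q1 q2])
  qed
  show "\<not> lf_accessible (abs_flow f a) l 0"
    by (rule main_gen[where c=c and f=f and a=a and \<phi>=\<phi> and l=l, OF assms(3) assms(5) cl cpm sm tm assms(4)])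
next
  fix f assume sg: "\<forall>i j. a i j \<noteq> 0 \<longrightarrow> sgn (a i j) = sgn (a (\<phi> i) (\<phi> j))"
    and sm: "smooth_fun f" and ev: "\<forall>x. f (- x) = f x"
  show "\<not> lf_accessible (abs_flow f a) l 0"
  proof (rule main_gen[where c="\<lambda>_. 1" and f=f and a=a and \<phi>=\<phi> and l=l, OF assms(3) assms(5)])
    show "smooth_fun f" by (rule sm)
    show "\<phi> \<noteq> id" by (rule assms(4))
    show "(1::real) = 1" by simp
    show "\<And>i::'v. (1::real) = 1 \<or> (1::real) = -1" by simp
    fix i j z w assume "a i j \<noteq> 0"
    then have "sgn (a i j) = sgn (a (\<phi> i) (\<phi> j))" using sg by blast
    then show "f (1 * z) - sgn (a i j) * f (1 * w) = 1 * (f z - sgn (a (\<phi> i) (\<phi> j)) * f w)" by simp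
  qed
qed

end
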